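(* Let $\mathbf{k}$ be a field, $\Gamma$ a $(d-1)$-dimensional simplicial complex with $n$ vertices, and $F$ a face of $\Gamma$ such that $\mathrm{lk}_\Gamma(F)$ has dimension $d'$ and $n'$ vertices. Then for every $1\le i\le n'-d'$ for which $M_i(\mathrm{lk}_\Gamma(F))$ is defined, $M_i(\mathrm{lk}_\Gamma(F))\le M_i(\Gamma)$.
   Context: A simplicial complex is a family of subsets of its vertex set closed under subsets containing all singletons. $\mathrm{lk}_\Gamma(F)=\{G\setminus F:F\subseteq G\in\Gamma\}$, regarded as a complex on its own vertex set. For a complex $\Delta$ with vertex set $V$, $M_i(\Delta)=\max\{|W|:W\subseteq V,\ \tilde H_{|W|-i-1}(\Delta[W];\mathbf{k})\ne0\}$ (the maximal degree shift of the $i$-th module in the minimal free resolution of the Stanley–Reisner ring), defined when this set is nonempty; $\Delta[W]$ is the induced subcomplex. *)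

theory Defs
  imports Main
begin

(* Its vertex set is the union of its faces,
   so it automatically contains all singletons of its vertex set. *)
definition simplicial_complex :: "'a set set \<Rightarrow> bool" where
  "simplicial_complex \<Delta> \<longleftrightarrow> finite \<Delta> \<and> {} \<in> \<Delta> \<and> (\<forall>G\<in>\<Delta>. \<forall>H. H \<subseteq> G \<longrightarrow> H \<in> \<Delta>)"

definition vertices :: "'a set set \<Rightarrow> 'a set" where
  "vertices \<Delta> = \<Union>\<Delta>"

definition dim :: "'a set set \<Rightarrow> int" where
  "dim \<Delta> = Max ((\<lambda>G. int (card G) - 1) ` \<Delta>)"

definition link :: "'a set set \<Rightarrow> 'a set \<Rightarrow> 'a set set" where
  "link \<Gamma> F = {G - F | G. F \<subseteq> G \<and> G \<in> \<Gamma>}"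

definition induced :: "'a set set \<Rightarrow> 'a set \<Rightarrow> 'a set set" where
  "induced \<Delta> W = {G \<in> \<Delta>. G \<subseteq> W}"

(* Reduced simplicial chains over the field 'k: a j-chain assigns coefficients to the
   faces with j+1 elements (the empty face lives in degree -1).  Orientation is taken
   with respect to the linear order on vertices. *)
definition chain :: "'a set set \<Rightarrow> int \<Rightarrow> ('a set \<Rightarrow> 'k::field) \<Rightarrow> bool" where
  "chain \<Delta> j c \<longleftrightarrow> (\<forall>G. c G \<noteq> 0 \<longrightarrow> G \<in> \<Delta> \<and> int (card G) = j + 1)"

(* boundary: d[v_0<...<v_j] = sum_k (-1)^k [v_0..^v_k..v_j] *)
definition bd :: "'a::linorder set set \<Rightarrow> ('a set \<Rightarrow> 'k::field) \<Rightarrow> ('a set \<Rightarrow> 'k)" where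
  "bd \<Delta> c = (\<lambda>G. \<Sum>v\<in>{v \<in> vertices \<Delta>. v \<notin> G \<and> insert v G \<in> \<Delta>}.
       (-1) ^ card {u \<in> G. u < v} * c (insert v G))"

definition red_hom_nonzero :: "'k::field itself \<Rightarrow> 'a::linorder set set \<Rightarrow> int \<Rightarrow> bool" where
  "red_hom_nonzero _ \<Delta> j \<longleftrightarrow>
     (\<exists>c :: 'a set \<Rightarrow> 'k. chain \<Delta> j c \<and> bd \<Delta> c = (\<lambda>_. 0) \<and>
        \<not> (\<exists>b :: 'a set \<Rightarrow> 'k. chain \<Delta> (j + 1) b \<and> bd \<Delta> b = c))"

definition Mset :: "'k::field itself \<Rightarrow> 'a::linorder set set \<Rightarrow> nat \<Rightarrow> nat set" where
  "Mset K \<Delta> i = {card W | W. W \<subseteq> vertices \<Delta> \<and>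
                    red_hom_nonzero K (induced \<Delta> W) (int (card W) - int i - 1)}"

definition M :: "'k::field itself \<Rightarrow> 'a::linorder set set \<Rightarrow> nat \<Rightarrow> nat" where
  "M K \<Delta> i = Max (Mset K \<Delta> i)"

end

theory Submission
  imports Defs
begin

definition closedc :: "'a set set \<Rightarrow> bool" where
  "closedc \<Delta> \<longleftrightarrow> (\<forall>G\<in>\<Delta>. \<forall>H. H \<subseteq> G \<longrightarrow> H \<in> \<Delta>)"

definition sgnx :: "'a::linorder \<Rightarrow> 'a set \<Rightarrow> 'k::field" where
  "sgnx x H = (-1) ^ card {u\<in>H. u < x}"

definition xpart :: "'a::linorder \<Rightarrow> ('a set \<Rightarrow> 'k::field) \<Rightarrow> 'a set \<Rightarrow> 'k" where
  "xpart x e = (\<lambda>H. if x \<notin> H then sgnx x H * e (insert x H) else 0)"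

lemma card_less_insert:
  assumes "finite H" "x \<notin> H"
  shows "card {u \<in> insert x H. u < v} = card {u\<in>H. u<v} + (if x < v then 1 else 0)"
proof (cases "x < v")
  case True
  then have "{u \<in> insert x H. u < v} = insert x {u\<in>H. u<v}" by auto
  then show ?thesis using assms True by simp
next
  case False
  then have "{u \<in> insert x H. u < v} = {u\<in>H. u<v}" by auto
  then show ?thesis using False by simp
qed

lemma sign_swap:
  fixes x v :: "'a::linorder"
  assumes "finite H" "x\<notin>H" "v\<notin>H" "v\<noteq>x"
  shows "(sgnx x H :: 'k::field) * (-1)^card {u\<in>insert x H. u<v}
         = - ((-1)^card {u\<in>H. u<v} * sgnx x (insert v H))"
proof -
  have c1: "card {u\<in>insert x H. u<v} = card {u\<in>H. u<v} + (if x<v then 1 else 0)"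
    using card_less_insert assms by blast
  have c2: "card {u\<in>insert v H. u<x} = card {u\<in>H. u<x} + (if v<x then 1 else 0)"
    using card_less_insert assms by blast
  show ?thesis using assms(4) unfolding sgnx_def c1 c2
    by (cases "x<v") (auto simp: power_add algebra_simps)
qed

lemma xpart_bd:
  fixes \<Delta> :: "'a::linorder set set" and e :: "'a set \<Rightarrow> 'k::field"
  assumes fin: "\<forall>G\<in>\<Delta>. finite G" and xH: "x \<notin> H"
  shows "xpart x (bd \<Delta> e) H = - bd {H. x\<notin>H \<and> insert x H \<in> \<Delta>} (xpart x e) H"
proof -
  let ?L = "{H. x\<notin>H \<and> insert x H \<in> \<Delta>}"
  let ?A = "{v \<in> vertices \<Delta>. v \<notin> insert x H \<and> insert v (insert x H) \<in> \<Delta>}"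
  let ?B = "{v \<in> vertices ?L. v \<notin> H \<and> insert v H \<in> ?L}"
  have AB: "?A = ?B"
  proof (rule set_eqI, rule iffI)
    fix v assume "v \<in> ?A"
    then show "v \<in> ?B" using xH by (auto simp: vertices_def insert_commute)
  next
    fix v assume "v \<in> ?B"
    then show "v \<in> ?A" using xH by (auto simp: vertices_def insert_commute)
  qed
  have "xpart x (bd \<Delta> e) H
     = (\<Sum>v\<in>?A. sgnx x H * ((-1)^card{u\<in>insert x H. u<v} * e (insert v (insert x H))))"
    using xH by (simp add: xpart_def bd_def sum_distrib_left)
  also have "\<dots> = (\<Sum>v\<in>?B. - ((-1)^card {u\<in>H. u<v} * xpart x e (insert v H)))"
  proof (rule sum.cong[OF AB])
    fix v assume "v \<in> ?B"
    then have v: "v\<notin>H" "v\<noteq>x" "insert x (insert v H) \<in> \<Delta>" by auto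
    then have "finite H" using fin by (meson finite_insert)
    have xe: "xpart x e (insert v H) = sgnx x (insert v H) * e (insert v (insert x H))"
      using xH v by (simp add: xpart_def insert_commute)
    have s: "(sgnx x H :: 'k) * (-1)^card {u\<in>insert x H. u<v}
         = - ((-1)^card {u\<in>H. u<v} * sgnx x (insert v H))"
      using sign_swap[OF \<open>finite H\<close> xH v(1,2)] by blast
    show "sgnx x H * ((-1)^card{u\<in>insert x H. u<v} * e (insert v (insert x H)))
        = - ((-1)^card {u\<in>H. u<v} * xpart x e (insert v H))"
      unfolding xe mult.assoc[symmetric] s by simp
  qed
  also have "\<dots> = - bd ?L (xpart x e) H" by (simp add: bd_def sum_negf)
  finally show ?thesis .
qed

lemma closed_fin:
  assumes "finite \<Delta>" "\<forall>G\<in>\<Delta>. \<forall>H. H \<subseteq> G \<longrightarrow> H \<in> \<Delta>"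
  shows "\<forall>G\<in>\<Delta>. finite G"
proof
  fix G assume "G \<in> \<Delta>"
  then have "Pow G \<subseteq> \<Delta>" using assms(2) by auto
  then have "finite (Pow G)" using assms(1) finite_subset by blast
  then show "finite G" by simp
qed

lemma core:
  fixes \<Delta> :: "'a::linorder set set" and K :: "'k::field itself"
  assumes finD: "finite \<Delta>" and cl: "\<forall>G\<in>\<Delta>. \<forall>H. H \<subseteq> G \<longrightarrow> H \<in> \<Delta>"
    and nz: "red_hom_nonzero K {H. x\<notin>H \<and> insert x H \<in> \<Delta>} j"
  shows "red_hom_nonzero K {G\<in>\<Delta>. x\<notin>G} j \<or> red_hom_nonzero K \<Delta> (j+1)"
proof -
  define L where "L = {H. x\<notin>H \<and> insert x H \<in> \<Delta>}"
  define D where "D = {G\<in>\<Delta>. x\<notin>G}"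
  have fin: "\<forall>G\<in>\<Delta>. finite G" using closed_fin[OF finD cl] .
  have finV: "finite (vertices \<Delta>)" unfolding vertices_def using finD fin by auto
  have LD: "L \<subseteq> D" using cl by (auto simp: L_def D_def)
  obtain z :: "'a set \<Rightarrow> 'k" where zc: "chain L j z" and zb: "bd L z = (\<lambda>_. 0)"
    and znb: "\<not>(\<exists>b::'a set \<Rightarrow> 'k. chain L (j+1) b \<and> bd L b = z)"
    using nz unfolding red_hom_nonzero_def L_def by blast
  have zL: "z G \<noteq> 0 \<Longrightarrow> G \<in> L" for G using zc by (auto simp: chain_def)
  have bdDz: "bd D z = bd L z"
  proof (rule ext)
    fix G
    let ?SD = "{v \<in> vertices D. v \<notin> G \<and> insert v G \<in> D}"
    let ?SL = "{v \<in> vertices L. v \<notin> G \<and> insert v G \<in> L}"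
    have f: "finite ?SD"
      by (rule finite_subset[OF _ finV]) (auto simp: vertices_def D_def)
    have sub: "?SL \<subseteq> ?SD" using LD by (auto simp: vertices_def)
    have z0: "\<forall>v\<in>?SD - ?SL. (-1)^card{u\<in>G. u<v} * z (insert v G) = 0"
    proof
      fix v assume v: "v \<in> ?SD - ?SL"
      show "(-1)^card{u\<in>G. u<v} * z (insert v G) = 0"
      proof (rule ccontr)
        assume "(-1)^card{u\<in>G. u<v} * z (insert v G) \<noteq> 0"
        then have "insert v G \<in> L" using zL by auto
        then have "v \<in> ?SL" using v by (auto simp: vertices_def)
        then show False using v by blast
      qed
    qed
    show "bd D z G = bd L z G" unfolding bd_def
      using sum.mono_neutral_right[OF f sub z0] by simp
  qed
  show ?thesis
  proof (cases "\<exists>b::'a set \<Rightarrow> 'k. chain D (j+1) b \<and> bd D b = z")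
    case False
    have cz: "chain D j z" using zc LD by (auto simp: chain_def)
    have "red_hom_nonzero K D j" unfolding red_hom_nonzero_def
    proof (rule exI[of _ z], intro conjI)
      show "chain D j z" by (rule cz)
      show "bd D z = (\<lambda>_. 0)" using bdDz zb by simp
      show "\<not>(\<exists>b. chain D (j + 1) b \<and> bd D b = z)" using False .
    qed
    then show ?thesis by (simp add: D_def)
  next
    case True
    then obtain b where bc: "chain D (j+1) b" and bb: "bd D b = z" by blast
    define c where "c = (\<lambda>G. if x \<in> G then sgnx x (G - {x}) * z (G - {x}) else - b G)"
    have ss: "sgnx x H * sgnx x H = (1::'k)" for H
      by (simp add: sgnx_def power_mult_distrib[symmetric])
    have xc: "xpart x c = z"
    proof (rule ext)
      fix H show "xpart x c H = z H"
      proof (cases "x \<in> H")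
        case True then have "z H = 0" using zL by (auto simp: L_def)
        then show ?thesis using True by (simp add: xpart_def)
      next
        case False
        then have "insert x H - {x} = H" by auto
        then show ?thesis using False ss by (simp add: xpart_def c_def mult.assoc[symmetric])
      qed
    qed
    have cc: "chain \<Delta> (j+1) c"
      unfolding chain_def
    proof (intro allI impI)
      fix G assume cG: "c G \<noteq> 0"
      show "G \<in> \<Delta> \<and> int (card G) = j+1+1"
      proof (cases "x\<in>G")
        case True
        then have "z (G - {x}) \<noteq> 0" using cG by (simp add: c_def)
        then have a: "G - {x} \<in> L" "int (card (G-{x})) = j+1" using zc by (auto simp: chain_def)
        then have G: "G \<in> \<Delta>" using True by (simp add: L_def insert_absorb)
        then have "finite G" using fin by blast
        then have "card G = Suc (card (G-{x}))" using True by (rule card.remove)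
        then show ?thesis using G a by simp
      next
        case False
        then have "b G \<noteq> 0" using cG by (simp add: c_def)
        then show ?thesis using bc by (auto simp: chain_def D_def)
      qed
    qed
    have cb: "bd \<Delta> c = (\<lambda>_. 0)"
    proof (rule ext)
      fix G
      show "bd \<Delta> c G = 0"
      proof (cases "x \<in> G")
        case True
        define H where "H = G - {x}"
        have xH: "x \<notin> H" and GH: "G = insert x H" using True by (auto simp: H_def)
        have "xpart x (bd \<Delta> c) H = - bd L (xpart x c) H" using xpart_bd[OF fin xH] by (simp add: L_def)
        also have "\<dots> = 0" using xc zb by simp
        finally have "sgnx x H * bd \<Delta> c G = 0" using xH GH by (simp add: xpart_def)
        moreover have "sgnx x H \<noteq> (0::'k)" by (simp add: sgnx_def)
        ultimately show ?thesis by simp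
      next
        case False
        let ?S = "{v \<in> vertices \<Delta>. v \<notin> G \<and> insert v G \<in> \<Delta>}"
        let ?SD = "{v \<in> vertices D. v \<notin> G \<and> insert v G \<in> D}"
        let ?f = "\<lambda>v. (-1)^card {u\<in>G. u<v} * c (insert v G)"
        have finS: "finite ?S" using finV by auto
        have SD: "?S - {x} = ?SD" using False by (auto simp: D_def vertices_def)
        have rest: "sum ?f ?SD = - z G"
        proof -
          have "sum ?f ?SD = (\<Sum>v\<in>?SD. - ((-1)^card {u\<in>G. u<v} * b (insert v G)))"
            by (rule sum.cong) (auto simp: c_def D_def)
          also have "\<dots> = - bd D b G" by (simp add: bd_def sum_negf)
          finally show ?thesis using bb by simp
        qed
        show ?thesis
        proof (cases "x \<in> ?S")
          case True
          have "bd \<Delta> c G = ?f x + sum ?f (?S - {x})" unfolding bd_def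
            using sum.remove[OF finS True] by simp
          moreover have "?f x = z G"
          proof -
            have "insert x G - {x} = G" using False by auto
            then have "?f x = sgnx x G * sgnx x G * z G" using False
              by (simp add: c_def sgnx_def mult.assoc)
            then show ?thesis using ss by simp
          qed
          ultimately show ?thesis using SD rest by simp
        next
          case False2: False
          then have "insert x G \<notin> \<Delta>" using \<open>x\<notin>G\<close> by (auto simp: vertices_def)
          then have "z G = 0" using zL False by (auto simp: L_def)
          have "bd \<Delta> c G = sum ?f ?S" by (simp add: bd_def)
          also have "?S = ?S - {x}" using False2 by auto
          finally show ?thesis using SD rest \<open>z G = 0\<close> by simp
        qed
      qed
    qed
    have cnb: "\<not>(\<exists>e::'a set \<Rightarrow> 'k. chain \<Delta> (j+1+1) e \<and> bd \<Delta> e = c)"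
    proof
      assume "\<exists>e::'a set \<Rightarrow> 'k. chain \<Delta> (j+1+1) e \<and> bd \<Delta> e = c"
      then obtain e :: "'a set \<Rightarrow> 'k" where ec: "chain \<Delta> (j+1+1) e" and bec: "bd \<Delta> e = c" by blast
      define f where "f = (\<lambda>H. - xpart x e H)"
      have "bd L f = z"
      proof (rule ext)
        fix H show "bd L f H = z H"
        proof (cases "x\<in>H")
          case True
          have "z H = 0" using zL True by (auto simp: L_def)
          moreover have E: "{v \<in> vertices L. v \<notin> H \<and> insert v H \<in> L} = {}" using True by (auto simp: L_def)
          have "bd L f H = 0" unfolding bd_def E by simp
          ultimately show ?thesis by simp
        next
          case False
          have "z H = xpart x (bd \<Delta> e) H" using xc bec by simp
          also have "\<dots> = - bd L (xpart x e) H" using xpart_bd[OF fin False] by (simp add: L_def)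
          also have "\<dots> = bd L f H" by (simp add: f_def bd_def sum_negf)
          finally show ?thesis by simp
        qed
      qed
      moreover have "chain L (j+1) f"
        unfolding chain_def
      proof (intro allI impI)
        fix H assume "f H \<noteq> 0"
        then have xH: "x \<notin> H" and "e (insert x H) \<noteq> 0" by (auto simp: f_def xpart_def split: if_splits)
        then have a: "insert x H \<in> \<Delta>" "int (card (insert x H)) = j+1+1+1" using ec by (auto simp: chain_def)
        then have "finite H" using fin by auto
        then show "H \<in> L \<and> int (card H) = j+1+1" using xH a by (simp add: L_def)
      qed
      ultimately show False using znb by blast
    qed
    have "red_hom_nonzero K \<Delta> (j+1)" unfolding red_hom_nonzero_def
      by (rule exI[of _ c]) (intro conjI cc cb cnb)
    then show ?thesis by blast
  qed
qed


lemma rhn_nonempty: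
  fixes K :: "'k::field itself" and X :: "'a::linorder set set"
  assumes "red_hom_nonzero K X j" shows "X \<noteq> {}"
proof
  assume X: "X = {}"
  obtain c :: "'a set \<Rightarrow> 'k" where c: "chain X j c" "bd X c = (\<lambda>_. 0)"
    and nb: "\<not>(\<exists>b. chain X (j+1) b \<and> bd X b = c)"
    using assms unfolding red_hom_nonzero_def by blast
  have "c = (\<lambda>_. 0)" using c(1) X by (auto simp: chain_def)
  then have "chain X (j+1) (\<lambda>_. 0) \<and> bd X (\<lambda>_. 0) = c"
    by (simp add: chain_def bd_def)
  then show False using nb by blast
qed

lemma link_single: "link \<Delta> {x} = {H. x\<notin>H \<and> insert x H \<in> \<Delta>}"
proof (rule set_eqI, rule iffI)
  fix H assume "H \<in> link \<Delta> {x}"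
  then obtain G where "H = G - {x}" "x \<in> G" "G \<in> \<Delta>" by (auto simp: link_def)
  then show "H \<in> {H. x\<notin>H \<and> insert x H \<in> \<Delta>}" by (simp add: insert_absorb)
next
  fix H assume "H \<in> {H. x\<notin>H \<and> insert x H \<in> \<Delta>}"
  then have "H = insert x H - {x}" "{x} \<subseteq> insert x H" "insert x H \<in> \<Delta>" by auto
  then show "H \<in> link \<Delta> {x}" unfolding link_def by blast
qed

lemma link_empty: "link \<Delta> {} = \<Delta>"
  unfolding link_def by force

lemma link_insert:
  assumes "x \<notin> F"
  shows "link \<Delta> (insert x F) = link (link \<Delta> F) {x}"
proof (rule set_eqI, rule iffI)
  fix H assume "H \<in> link \<Delta> (insert x F)"
  then obtain G where G: "H = G - insert x F" "insert x F \<subseteq> G" "G \<in> \<Delta>" by (auto simp: link_def)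
  then have "G - F \<in> link \<Delta> F" unfolding link_def by blast
  moreover have "H = (G - F) - {x}" "{x} \<subseteq> G - F" using G assms by auto
  ultimately show "H \<in> link (link \<Delta> F) {x}" unfolding link_def by blast
next
  fix H assume "H \<in> link (link \<Delta> F) {x}"
  then obtain H' where "H = H' - {x}" "x \<in> H'" "H' \<in> link \<Delta> F" by (auto simp: link_def)
  then obtain G where "H = G - insert x F" "insert x F \<subseteq> G" "G \<in> \<Delta>"
    by (auto simp: link_def)
  then show "H \<in> link \<Delta> (insert x F)" unfolding link_def by blast
qed

lemma link_closed:
  assumes "closedc \<Delta>" shows "closedc (link \<Delta> F)"
  unfolding closedc_def
proof (intro ballI allI impI)
  fix G H assume G: "G \<in> link \<Delta> F" and HG: "H \<subseteq> G"
  then obtain G' where G': "G = G' - F" "F \<subseteq> G'" "G' \<in> \<Delta>" by (auto simp: link_def)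
  then have "H \<union> F \<in> \<Delta>" using assms HG unfolding closedc_def by (meson Diff_subset Un_least order_trans)
  moreover have "H = (H \<union> F) - F" using HG G' by auto
  ultimately show "H \<in> link \<Delta> F" unfolding link_def by blast
qed

lemma link_finite:
  assumes "finite \<Delta>" shows "finite (link \<Delta> F)"
proof -
  have "link \<Delta> F \<subseteq> (\<lambda>G. G - F) ` \<Delta>" by (auto simp: link_def)
  then show ?thesis using assms finite_subset by blast
qed

lemma finite_vertices:
  assumes "finite \<Delta>" "closedc \<Delta>" shows "finite (vertices \<Delta>)"
  using closed_fin[OF assms(1)] assms unfolding closedc_def vertices_def by auto

lemma step:
  fixes \<Delta> :: "'a::linorder set set" and K :: "'k::field itself"
  assumes finD: "finite \<Delta>" and cl: "closedc \<Delta>" and m: "m \<in> Mset K (link \<Delta> {x}) i"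
  shows "\<exists>m'\<in>Mset K \<Delta> i. m \<le> m'"
proof -
  obtain W where mW: "m = card W" and Wv: "W \<subseteq> vertices (link \<Delta> {x})"
    and nz: "red_hom_nonzero K (induced (link \<Delta> {x}) W) (int (card W) - int i - 1)"
    using m unfolding Mset_def by blast
  have xW: "x \<notin> W" using Wv by (auto simp: link_single vertices_def)
  have WV: "W \<subseteq> vertices \<Delta>" using Wv by (auto simp: link_single vertices_def)
  have finW: "finite W" using finite_subset[OF WV finite_vertices[OF finD cl]] .
  let ?D = "induced \<Delta> (insert x W)"
  have e1: "induced (link \<Delta> {x}) W = {H. x \<notin> H \<and> insert x H \<in> ?D}"
    using xW by (auto simp: induced_def link_single)
  have e2: "{G \<in> ?D. x \<notin> G} = induced \<Delta> W" using xW by (auto simp: induced_def)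
  have f: "finite ?D" using finD by (simp add: induced_def)
  have c: "\<forall>G\<in>?D. \<forall>H. H \<subseteq> G \<longrightarrow> H \<in> ?D" using cl by (auto simp: induced_def closedc_def)
  have "red_hom_nonzero K {G \<in> ?D. x \<notin> G} (int (card W) - int i - 1)
      \<or> red_hom_nonzero K ?D (int (card W) - int i - 1 + 1)"
    using core[OF f c nz[unfolded e1]] .
  then show ?thesis
  proof
    assume "red_hom_nonzero K {G \<in> ?D. x \<notin> G} (int (card W) - int i - 1)"
    then have "card W \<in> Mset K \<Delta> i" using WV e2 unfolding Mset_def by auto
    then show ?thesis using mW by blast
  next
    assume h: "red_hom_nonzero K ?D (int (card W) - int i - 1 + 1)"
    have "induced (link \<Delta> {x}) W \<noteq> {}" using rhn_nonempty[OF nz] .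
    then have "x \<in> vertices \<Delta>" by (auto simp: induced_def link_single vertices_def)
    then have s: "insert x W \<subseteq> vertices \<Delta>" using WV by auto
    have e: "int (card (insert x W)) - int i - 1 = int (card W) - int i - 1 + 1" using finW xW by simp
    have h': "red_hom_nonzero K ?D (int (card (insert x W)) - int i - 1)" using h unfolding e .
    have "card (insert x W) \<in> Mset K \<Delta> i" unfolding Mset_def
      using s h' by blast
    moreover have "m \<le> card (insert x W)" using finW xW mW by simp
    ultimately show ?thesis by blast
  qed
qed

lemma link_chain:
  fixes \<Gamma> :: "'a::linorder set set" and K :: "'k::field itself"
  assumes "finite F" "finite \<Gamma>" "closedc \<Gamma>"
  shows "\<forall>m\<in>Mset K (link \<Gamma> F) i. \<exists>m'\<in>Mset K \<Gamma> i. m \<le> m'"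
  using assms(1)
proof (induction F rule: finite_induct)
  case empty
  then show ?case by (auto simp: link_empty)
next
  case (insert x F)
  show ?case
  proof
    fix m assume "m \<in> Mset K (link \<Gamma> (insert x F)) i"
    then have "m \<in> Mset K (link (link \<Gamma> F) {x}) i" using link_insert[OF insert(2)] by simp
    then obtain m' where "m' \<in> Mset K (link \<Gamma> F) i" "m \<le> m'"
      using step[OF link_finite[OF assms(2)] link_closed[OF assms(3)]] by blast
    then show "\<exists>m'\<in>Mset K \<Gamma> i. m \<le> m'" using insert(3) by (meson order_trans)
  qed
qed

lemma finite_Mset:
  assumes "finite (vertices \<Delta>)" shows "finite (Mset K \<Delta> i)"
  by (rule finite_subset[of _ "card ` Pow (vertices \<Delta>)"]) (use assms in \<open>auto simp: Mset_def\<close>)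

theorem lemma4p1:
  fixes K :: "'k::field itself"
    and \<Gamma> :: "'a::linorder set set"
    and F :: "'a set"
    and d n n' i :: nat and d' :: int
  assumes "simplicial_complex \<Gamma>"
    and "dim \<Gamma> = int d - 1"
    and "card (vertices \<Gamma>) = n"
    and "F \<in> \<Gamma>"
    and "dim (link \<Gamma> F) = d'"
    and "card (vertices (link \<Gamma> F)) = n'"
    and "1 \<le> i" and "int i \<le> int n' - d'"
    and "Mset K (link \<Gamma> F) i \<noteq> {}"
  shows "Mset K \<Gamma> i \<noteq> {} \<and> M K (link \<Gamma> F) i \<le> M K \<Gamma> i"
proof -
  have fG: "finite \<Gamma>" and cG: "closedc \<Gamma>"
    using assms(1) unfolding simplicial_complex_def closedc_def by auto
  have fF: "finite F" using closed_fin[OF fG cG[unfolded closedc_def]] assms(4) by blast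
  have R: "\<forall>m\<in>Mset K (link \<Gamma> F) i. \<exists>m'\<in>Mset K \<Gamma> i. m \<le> m'"
    using link_chain[OF fF fG cG] .
  have f1: "finite (Mset K (link \<Gamma> F) i)"
    by (rule finite_Mset, rule finite_vertices[OF link_finite[OF fG] link_closed[OF cG]])
  have f2: "finite (Mset K \<Gamma> i)" by (rule finite_Mset, rule finite_vertices[OF fG cG])
  have "M K (link \<Gamma> F) i \<in> Mset K (link \<Gamma> F) i"
    unfolding M_def using Max_in[OF f1 assms(9)] .
  then obtain m' where m': "m' \<in> Mset K \<Gamma> i" "M K (link \<Gamma> F) i \<le> m'" using R by blast
  have "m' \<le> M K \<Gamma> i" unfolding M_def using Max_ge[OF f2 m'(1)] .
  then show ?thesis using m' by auto
qed

end
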